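(* For all integers $i\geq 1$, \[ v_3(a_i-1)=\begin{cases} 0, & i\equiv 0,4,5,7 \pmod 8;\\ v_3(i-1)+1, & i\equiv 1\pmod 8;\\ v_3(i+2)+1, & i\equiv 6 \pmod 8;\\ v_3(i-2)+2, & i\equiv 2\pmod{24};\\ 2, & i\equiv 10\pmod{24};\\ v_3\big((i+6)(i+30)\big)+2, & i\equiv 18\pmod{24};\\ v_3(i-3)+2, & i\equiv 3\pmod{24};\\ v_3(i+13)+2, & i\equiv 11\pmod{24};\\ v_3(i+5)+2, & i\equiv 19\pmod{24}. \end{cases} \]
   Context: The Narayana sequence $(a_n)_{n\geq 0}$ is defined by $a_0=0$, $a_1=a_2=1$ and $a_n=a_{n-1}+a_{n-3}$ for all $n\geq 3$. For an integer $x$, $v_3(x)$ denotes the $3$-adic valuation of $x$ (the exponent of the largest power of $3$ dividing $x$), with the convention $v_3(0)=+\infty$. *)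

theory Defs
  imports Main "HOL-Library.Extended_Nat" "HOL-Computational_Algebra.Primes"
begin

fun narayana :: "nat \<Rightarrow> int" where
  "narayana 0 = 0"
| "narayana (Suc 0) = 1"
| "narayana (Suc (Suc 0)) = 1"
| "narayana (Suc (Suc (Suc n))) = narayana (Suc (Suc n)) + narayana n"

definition v3 :: "int \<Rightarrow> enat" where
  "v3 x = (if x = 0 then \<infinity> else enat (multiplicity (3::int) x))"

end

theory Submission
  imports Defs
begin


lemma pow3_step:
  fixes P X :: "'a::comm_ring_1"
  assumes "P = 1 + 3^(Suc a') * X"
  shows "\<exists>Y W. P^(3^t) = 1 + 3^(Suc a' + t) * Y \<and> Y = X + 3^(Suc a') * W"
proof (induction t)
  case 0
  then show ?case using assms by (intro exI[of _ X] exI[of _ 0]) simp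
next
  case (Suc t)
  then obtain Y W where h: "P^(3^t) = 1 + 3^(Suc a' + t) * Y" "Y = X + 3^(Suc a') * W" by blast
  have "P^(3^Suc t) = (P^(3^t))^3" by (simp add: power_mult[symmetric] mult.commute)
  also have "\<dots> = 1 + 3^(Suc a' + Suc t) * (Y + 3^(Suc a' + t) * Y^2 + 3^(a' + Suc a' + 2*t) * Y^3)"
    unfolding h(1) by (simp add: power2_eq_square power3_eq_cube power_add mult_2 mult_2_right algebra_simps)
  also have "Y + 3^(Suc a' + t) * Y^2 + 3^(a' + Suc a' + 2*t) * Y^3
     = X + 3^(Suc a') * (W + 3^t * Y^2 + 3^(a'+2*t) * Y^3)"
    unfolding h(2) by (simp add: power_add mult_2 mult_2_right algebra_simps)
  finally show ?case by blast
qed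

lemma powq:
  fixes c Y :: "'a::comm_ring_1"
  shows "\<exists>Z. (1 + c*Y)^q = 1 + c*(of_nat q * Y + c*Z)"
proof (induction q)
  case 0
  then show ?case by (intro exI[of _ 0]) simp
next
  case (Suc q)
  then obtain Z where h: "(1 + c*Y)^q = 1 + c*(of_nat q * Y + c*Z)" by blast
  have "(1 + c*Y)^Suc q = 1 + c*(of_nat (Suc q) * Y + c*(Z + (of_nat q * Y + c*Z) * Y))"
    unfolding power_Suc2 h by (simp add: algebra_simps)
  then show ?case by blast
qed

lemma powm:
  fixes P X :: "'a::comm_ring_1"
  assumes "P = 1 + 3^(Suc a') * X"
  shows "\<exists>W. P^(3^t * q) = 1 + 3^(Suc a' + t) * (of_nat q * X + 3^(Suc a') * W)"
proof -
  obtain Y W where h: "P^(3^t) = 1 + 3^(Suc a' + t) * Y" "Y = X + 3^(Suc a') * W"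
    using pow3_step[OF assms] by blast
  obtain Z where z: "(1 + 3^(Suc a' + t) * Y)^q = 1 + 3^(Suc a' + t)*(of_nat q * Y + 3^(Suc a' + t)*Z)"
    using powq by blast
  have "P^(3^t * q) = 1 + 3^(Suc a' + t)*(of_nat q * Y + 3^(Suc a' + t)*Z)"
    by (simp only: power_mult h(1) z)
  also have "of_nat q * Y + 3^(Suc a' + t)*Z = of_nat q * X + 3^(Suc a') * (of_nat q * W + 3^t * Z)"
    by (simp add: h(2) power_add algebra_simps)
  finally show ?thesis by blast
qed



datatype nr = NR (c0: int) (c1: int) (c2: int)

instantiation nr :: comm_ring_1
begin
definition "zero_nr = NR 0 0 0"
definition "one_nr = NR 1 0 0"
definition "plus_nr a b = NR (c0 a + c0 b) (c1 a + c1 b) (c2 a + c2 b)"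
definition "minus_nr a b = NR (c0 a - c0 b) (c1 a - c1 b) (c2 a - c2 b)"
definition "uminus_nr a = NR (- c0 a) (- c1 a) (- c2 a)"
definition "times_nr a b = NR
   (c0 a * c0 b + (c1 a * c2 b + c2 a * c1 b) + c2 a * c2 b)
   (c0 a * c1 b + c1 a * c0 b + c2 a * c2 b)
   (c0 a * c2 b + c1 a * c1 b + c2 a * c0 b + (c1 a * c2 b + c2 a * c1 b) + c2 a * c2 b)"
instance
  by intro_classes
     (simp_all add: zero_nr_def one_nr_def plus_nr_def minus_nr_def uminus_nr_def times_nr_def
        nr.expand algebra_simps)
end

lemma nr_simps [simp]:
  "NR a b c + NR d e f = NR (a+d) (b+e) (c+f)"
  "NR a b c - NR d e f = NR (a-d) (b-e) (c-f)"
  "NR a b c * NR d e f = NR (a*d + (b*f + c*e) + c*f) (a*e + b*d + c*f) (a*f + b*e + c*d + (b*f+c*e) + c*f)"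
  by (simp_all add: plus_nr_def minus_nr_def times_nr_def)

lemma of_nat_nr: "(of_nat n :: nr) = NR (int n) 0 0"
  by (induction n) (simp_all add: zero_nr_def one_nr_def)

lemma of_int_nr: "(of_int n :: nr) = NR n 0 0"
  by (cases n rule: int_cases) (simp_all add: of_nat_nr uminus_nr_def one_nr_def)

definition L :: "nr \<Rightarrow> int" where "L z = c1 z + c2 z"

lemma L_add: "L (a + b) = L a + L b" by (simp add: L_def plus_nr_def)
lemma L_diff: "L (a - b) = L a - L b" by (simp add: L_def minus_nr_def)
lemma L_of_int: "L (of_int c * z) = c * L z"
  by (cases z) (simp add: L_def of_int_nr algebra_simps)
lemma L_pow3: "L ((3::nr)^k * z) = 3^k * L z"
proof -
  have "(3::nr)^k = of_int (3^k)" by simp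
  then have "L ((3::nr)^k * z) = L (of_int (3^k) * z)" by (simp only:)
  then show ?thesis by (simp only: L_of_int)
qed
lemma L_of_nat: "L (of_nat c * z) = int c * L z"
  using L_of_int[of "int c" z] by simp

definition xx :: nr where "xx = NR 0 1 0"

lemma xx_rec: "xx^(Suc (Suc (Suc n))) = xx^(Suc (Suc n)) + xx^n"
proof -
  have "xx^3 = xx^2 + 1" by (simp add: xx_def power3_eq_cube power2_eq_square one_nr_def)
  have a: "xx^(Suc (Suc (Suc n))) = xx^n * xx^3" by (simp add: power3_eq_cube mult_ac)
  have b: "xx^(Suc (Suc n)) = xx^n * xx^2" by (simp add: power2_eq_square mult_ac)
  show ?thesis unfolding a b \<open>xx^3 = xx^2 + 1\<close> by (simp add: algebra_simps)
qed

lemma L_xx: "L (xx^n) = narayana n"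
proof (induction n rule: narayana.induct)
  case 4
  then show ?case by (simp only: xx_rec L_add narayana.simps)
qed (simp_all add: L_def xx_def one_nr_def)



lemma L_expand:
  assumes "P^k = 1 + 3^e * (of_nat q * X + 3^f * W)"
  shows "L (P^k * w) - L w = 3^e * (int q * L (X*w) + 3^f * L (W*w))"
proof -
  have "P^k * w - w = 3^e * (of_nat q * (X*w) + 3^f * (W*w))"
    by (simp add: assms algebra_simps)
  then have "L (P^k * w) - L w = L (3^e * (of_nat q * (X*w) + 3^f * (W*w)))"
    by (simp only: L_diff[symmetric])
  also have "\<dots> = 3^e * (int q * L (X*w) + 3^f * L (W*w))"
    by (simp only: L_pow3 L_add L_of_nat)
  finally show ?thesis .
qed

lemma lower:
  assumes P: "P = 1 + 3^(Suc a') * X" and d: "d \<le> Suc a'" "(3::int)^d dvd L (X*w)"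
  shows "(3::int)^(Suc a' + d) dvd (L (P^m * w) - L w)"
proof -
  obtain W where "P^(3^0 * m) = 1 + 3^(Suc a' + 0) * (of_nat m * X + 3^(Suc a') * W)"
    using powm[OF P] by blast
  then have "P^m = 1 + 3^(Suc a') * (of_nat m * X + 3^(Suc a') * W)" by simp
  from L_expand[OF this, of w]
  have e: "L (P^m * w) - L w = 3^(Suc a') * (int m * L (X*w) + 3^(Suc a') * L (W*w))" .
  have "(3::int)^d dvd (int m * L (X*w) + 3^(Suc a') * L (W*w))"
  proof (rule dvd_add)
    show "(3::int)^d dvd int m * L (X*w)" using d(2) by (rule dvd_mult)
    have "(3::int)^d dvd 3^(Suc a')" using d(1) by (rule le_imp_power_dvd)
    then show "(3::int)^d dvd 3^(Suc a') * L (W*w)" by (rule dvd_mult2)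
  qed
  then show ?thesis unfolding e power_add by (rule mult_dvd_mono[OF dvd_refl])
qed

lemma exact:
  assumes P: "P = 1 + 3^(Suc a') * X" and d: "d < Suc a'" "L (X*w) = 3^d * u" "\<not> 3 dvd u"
    and m: "m \<ge> 1"
  shows "L (P^m * w) - L w \<noteq> 0 \<and>
    multiplicity (3::int) (L (P^m * w) - L w) = Suc a' + multiplicity (3::int) (int m) + d"
proof -
  obtain q where mq: "m = 3^(multiplicity (3::nat) m) * q" "\<not> 3 dvd q"
  proof -
    have "m \<noteq> 0" using m by simp
    then show ?thesis using multiplicity_decompose'[of m "3::nat"] that by auto
  qed
  define t where "t = multiplicity (3::nat) m"
  have mq': "m = 3^t * q" using mq t_def by simp
  have mt: "multiplicity (3::int) (int m) = t"
  proof (rule multiplicity_decomposeI[of _ _ t "int q"])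
    show "int m = 3^t * int q" using mq' by simp
    show "\<not> (3::int) dvd int q" using mq(2) by presburger
  qed simp
  obtain W where "P^(3^t * q) = 1 + 3^(Suc a' + t) * (of_nat q * X + 3^(Suc a') * W)"
    using powm[OF P] by blast
  then have "P^m = 1 + 3^(Suc a' + t) * (of_nat q * X + 3^(Suc a') * W)" using mq' by simp
  from L_expand[OF this, of w]
  have e: "L (P^m * w) - L w = 3^(Suc a' + t) * (int q * L (X*w) + 3^(Suc a') * L (W*w))" .
  obtain s where s: "Suc a' = Suc (d + s)" using less_imp_Suc_add[OF d(1)] by blast
  have p: "(3::int)^(Suc a') = 3^d * (3 * 3^s)" unfolding s by (simp add: power_add)
  have e2: "L (P^m * w) - L w = 3^(Suc a' + t + d) * (int q * u + 3 * (3^s * L (W*w)))"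
    unfolding e d(2) power_add p by (simp only: algebra_simps)
  have nd: "\<not> (3::int) dvd (int q * u + 3 * (3^s * L (W*w)))"
  proof
    assume "(3::int) dvd (int q * u + 3 * (3^s * L (W*w)))"
    then have "(3::int) dvd int q * u" by (simp add: dvd_add_left_iff)
    then have "(3::int) dvd int q \<or> 3 dvd u" using prime_dvd_mult_iff[of "3::int"] by auto
    then show False using mq(2) d(3) by presburger
  qed
  have "multiplicity (3::int) (L (P^m * w) - L w) = Suc a' + t + d"
    by (rule multiplicity_decomposeI[OF e2 nd]) simp
  moreover have "L (P^m * w) - L w \<noteq> 0" using e2 nd by auto
  ultimately show ?thesis using mt by simp
qed



lemma numeral_nr: "(numeral k :: nr) = NR (numeral k) 0 0"
  using of_int_nr[of "numeral k"] by simp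

lemma xx2: "xx^2 = NR 0 0 1" by (simp add: xx_def power2_eq_square)
lemma xx8: "xx^8 = NR 4 3 6"
proof -
  have "xx^8 = ((xx^2)^2)^2" by (simp flip: power_mult)
  also have "\<dots> = NR 4 3 6" by (simp only: xx2) (simp add: power2_eq_square)
  finally show ?thesis .
qed
lemma xx24: "xx^24 = NR 1873 1278 2745"
proof -
  have "xx^24 = (xx^8)^3" by (simp flip: power_mult)
  then show ?thesis by (simp add: xx8 power3_eq_cube)
qed
lemma xx72: "xx^72 = NR 174128175064 118812495276 255197244033"
proof -
  have "xx^72 = (xx^24)^3" by (simp flip: power_mult)
  then show ?thesis by (simp add: xx24 power3_eq_cube)
qed

definition "X8 = NR 1 1 2"
definition "X24 = NR 208 142 305"
definition "X72 = NR 6449191669 4400462788 9451749779"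

lemma P8: "xx^8 = 1 + 3^(Suc 0) * X8"
proof -
  have e: "(3::nr)^(Suc 0) = 3" by simp
  show ?thesis unfolding e by (simp add: xx8 X8_def numeral_nr one_nr_def)
qed
lemma P24: "xx^24 = 1 + 3^(Suc 1) * X24"
proof -
  have e: "(3::nr)^(Suc 1) = 9" by simp
  show ?thesis unfolding e by (simp add: xx24 X24_def numeral_nr one_nr_def)
qed
lemma P72: "xx^72 = 1 + 3^(Suc 2) * X72"
proof -
  have e: "(3::nr)^(Suc 2) = 27" by simp
  show ?thesis unfolding e by (simp add: xx72 X72_def numeral_nr one_nr_def)
qed

lemma xxpow: "xx^(N*m + c) = (xx^N)^m * xx^c"
  by (simp add: power_add power_mult)

lemma xxshift:
  assumes "xx^k * w = 1" "i + k = N * m"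
  shows "xx^i = (xx^N)^m * w"
proof -
  have "(xx^N)^m * w = xx^(i+k) * w" by (simp add: assms(2) power_mult)
  also have "\<dots> = xx^i * (xx^k * w)" by (simp add: power_add mult.assoc)
  finally show ?thesis using assms(1) by simp
qed

definition "w2 = NR (-1) 1 0"
definition "w13 = NR 4 9 (-8)"
definition "w5 = NR (-2) 0 1"
definition "w6 = NR 0 3 (-2)"
definition "w30 = NR 135 201 (-200)"

lemma w2: "xx^2 * w2 = 1" by (simp add: xx2 w2_def one_nr_def)
lemma w5: "xx^5 * w5 = 1" by (simp add: xx_def numeral_eq_Suc w5_def one_nr_def)
lemma w6: "xx^6 * w6 = 1" by (simp add: xx_def numeral_eq_Suc w6_def one_nr_def)
lemma w13: "xx^13 * w13 = 1" by (simp add: xx_def numeral_eq_Suc w13_def one_nr_def)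
lemma w30: "xx^30 * w30 = 1" by (simp add: xx_def numeral_eq_Suc w30_def one_nr_def)



lemma case_exact:
  assumes "xx^i = P^m * w" "L w = 1" "P = 1 + 3^(Suc a')*X" "d < Suc a'"
    "L (X*w) = 3^d*u" "\<not> 3 dvd u" "m \<ge> 1"
  shows "v3 (narayana i - 1) = enat (Suc a' + multiplicity (3::int) (int m) + d)"
proof -
  have n: "narayana i = L (P^m * w)" using L_xx[of i] assms(1) by simp
  show ?thesis using exact[OF assms(3-7)] assms(2) by (simp add: n v3_def)
qed

lemma case_lower:
  assumes "xx^i = P^m * w" "P = 1 + 3^(Suc a')*X" "d \<le> Suc a'" "(3::int)^d dvd L (X*w)"
  shows "(3::int)^(Suc a'+d) dvd narayana i - L w"
proof -
  have n: "narayana i = L (P^m * w)" using L_xx[of i] assms(1) by simp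
  show ?thesis unfolding n by (rule lower[OF assms(2-4)])
qed

lemma mult_form:
  assumes "x = 3^k * (c*y)" "\<not> (3::int) dvd c" "y \<noteq> 0"
  shows "v3 x = enat (k + multiplicity 3 y)"
proof -
  obtain y' where y: "y = 3 ^ multiplicity 3 y * y'" "\<not> 3 dvd y'"
    using multiplicity_decompose'[of y "3::int"] assms(3) by auto
  have x: "x = 3^(k + multiplicity 3 y) * (c*y')"
    using assms(1) y(1) by (simp add: power_add algebra_simps)
  have nd: "\<not> (3::int) dvd c*y'"
    using assms(2) y(2) prime_dvd_mult_iff[of "3::int"] by auto
  have "x \<noteq> 0" using x nd by auto
  moreover have "multiplicity 3 x = k + multiplicity 3 y"
    by (rule multiplicity_decomposeI[OF x nd]) simp
  ultimately show ?thesis by (simp add: v3_def)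
qed

lemma v3_zero: "\<not> (3::int) dvd x \<Longrightarrow> v3 x = 0"
  by (auto simp: v3_def not_dvd_imp_multiplicity_0 zero_enat_def)

lemma v3_exact:
  assumes "(3::int)^n dvd x" "\<not> 3^Suc n dvd x"
  shows "v3 x = enat n"
proof -
  have "x \<noteq> 0" using assms(2) by auto
  then show ?thesis using multiplicity_eqI[OF assms] by (simp add: v3_def)
qed

lemma L_w: "L xx = 1" "L w2 = 1" "L w5 = 1" "L w6 = 1" "L w13 = 1" "L w30 = 1"
  by (simp_all add: L_def xx_def w2_def w5_def w6_def w13_def w30_def)

lemma c0457:
  assumes "i mod 8 \<in> {0, 4, 5, 7}"
  shows "v3 (narayana i - 1) = 0"
proof -
  define m where "m = i div 8"
  define r where "r = i mod 8"
  have i: "xx^i = (xx^8)^m * xx^r" unfolding m_def r_def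
    by (metis div_mult_mod_eq xxpow mult.commute)
  have "(3::int)^(Suc 0 + 0) dvd narayana i - L (xx^r)"
    by (rule case_lower[OF i P8]) auto
  then have d: "3 dvd narayana i - narayana r" by (simp add: L_xx)
  have "r \<in> {0,4,5,7}" using assms r_def by simp
  then have "\<not> 3 dvd narayana r - 1" by (auto simp: numeral_eq_Suc)
  then have "\<not> 3 dvd narayana i - 1" using d
    by (metis diff_add_cancel dvd_add_right_iff add_diff_eq)
  then show ?thesis by (rule v3_zero)
qed



lemma c1:
  assumes "i mod 8 = 1"
  shows "v3 (narayana i - 1) = v3 (int i - 1) + 1"
proof -
  define m where "m = i div 8"
  have im: "i = 8*m + 1" using assms unfolding m_def by presburger
  show ?thesis
  proof (cases "m = 0")
    case True
    then show ?thesis using im by (simp add: v3_def)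
  next
    case False
    have i: "xx^i = (xx^8)^m * xx" using xxpow[of 8 m 1] im by simp
    have "v3 (narayana i - 1) = enat (Suc 0 + multiplicity (3::int) (int m) + 0)"
      by (rule case_exact[OF i L_w(1) P8, of 0 4]) (use False in \<open>auto simp: X8_def xx_def L_def\<close>)
    moreover have "v3 (int i - 1) = enat (0 + multiplicity 3 (int m))"
      by (rule mult_form[of _ _ 8]) (use im False in auto)
    ultimately show ?thesis by (simp add: one_enat_def)
  qed
qed

lemma c6:
  assumes "i mod 8 = 6"
  shows "v3 (narayana i - 1) = v3 (int i + 2) + 1"
proof -
  define m where "m = (i + 2) div 8"
  have im: "i + 2 = 8*m" using assms unfolding m_def by presburger
  have m1: "m \<ge> 1" using im by simp
  have i: "xx^i = (xx^8)^m * w2" by (rule xxshift[OF w2 im])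
  have "v3 (narayana i - 1) = enat (Suc 0 + multiplicity (3::int) (int m) + 0)"
    by (rule case_exact[OF i L_w(2) P8, of 0 1]) (use m1 in \<open>auto simp: X8_def w2_def L_def\<close>)
  moreover have "v3 (int i + 2) = enat (0 + multiplicity 3 (int m))"
    by (rule mult_form[of _ _ 8]) (use im m1 in auto)
  ultimately show ?thesis by (simp add: one_enat_def)
qed

lemma c2:
  assumes "i mod 24 = 2"
  shows "v3 (narayana i - 1) = v3 (int i - 2) + 2"
proof -
  define m where "m = i div 24"
  have im: "i = 24*m + 2" using assms unfolding m_def by presburger
  show ?thesis
  proof (cases "m = 0")
    case True
    then show ?thesis using im by (simp add: v3_def)
  next
    case False
    have i: "xx^i = (xx^24)^m * xx^2" using xxpow[of 24 m 2] im by simp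
    have "v3 (narayana i - 1) = enat (Suc 1 + multiplicity (3::int) (int m) + 1)"
      by (rule case_exact[OF i _ P24, of 1 320]) (use False in \<open>auto simp: X24_def xx2 L_def\<close>)
    moreover have "v3 (int i - 2) = enat (1 + multiplicity 3 (int m))"
      by (rule mult_form[of _ _ 8]) (use im False in auto)
    ultimately show ?thesis by (simp add: numeral_eq_enat)
  qed
qed

lemma c3:
  assumes "i mod 24 = 3"
  shows "v3 (narayana i - 1) = v3 (int i - 3) + 2"
proof -
  define m where "m = i div 24"
  have im: "i = 24*m + 3" using assms unfolding m_def by presburger
  have xx3: "xx^3 = NR 1 0 1" by (simp add: xx_def power3_eq_cube)
  show ?thesis
  proof (cases "m = 0")
    case True
    then show ?thesis using im by (simp add: v3_def numeral_eq_Suc)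
  next
    case False
    have i: "xx^i = (xx^24)^m * xx^3" using xxpow[of 24 m 3] im by simp
    have "v3 (narayana i - 1) = enat (Suc 1 + multiplicity (3::int) (int m) + 1)"
      by (rule case_exact[OF i _ P24, of 1 469]) (use False in \<open>auto simp: X24_def xx3 L_def\<close>)
    moreover have "v3 (int i - 3) = enat (1 + multiplicity 3 (int m))"
      by (rule mult_form[of _ _ 8]) (use im False in auto)
    ultimately show ?thesis by (simp add: numeral_eq_enat)
  qed
qed

lemma c11:
  assumes "i mod 24 = 11"
  shows "v3 (narayana i - 1) = v3 (int i + 13) + 2"
proof -
  define m where "m = (i + 13) div 24"
  have im: "i + 13 = 24*m" using assms unfolding m_def by presburger
  have m1: "m \<ge> 1" using im by simp
  have i: "xx^i = (xx^24)^m * w13" by (rule xxshift[OF w13 im])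
  have "v3 (narayana i - 1) = enat (Suc 1 + multiplicity (3::int) (int m) + 1)"
    by (rule case_exact[OF i L_w(5) P24, of 1 1]) (use m1 in \<open>auto simp: X24_def w13_def L_def\<close>)
  moreover have "v3 (int i + 13) = enat (1 + multiplicity 3 (int m))"
    by (rule mult_form[of _ _ 8]) (use im m1 in auto)
  ultimately show ?thesis by (simp add: numeral_eq_enat)
qed

lemma c19:
  assumes "i mod 24 = 19"
  shows "v3 (narayana i - 1) = v3 (int i + 5) + 2"
proof -
  define m where "m = (i + 5) div 24"
  have im: "i + 5 = 24*m" using assms unfolding m_def by presburger
  have m1: "m \<ge> 1" using im by simp
  have i: "xx^i = (xx^24)^m * w5" by (rule xxshift[OF w5 im])
  have "v3 (narayana i - 1) = enat (Suc 1 + multiplicity (3::int) (int m) + 1)"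
    by (rule case_exact[OF i L_w(3) P24, of 1 22]) (use m1 in \<open>auto simp: X24_def w5_def L_def\<close>)
  moreover have "v3 (int i + 5) = enat (1 + multiplicity 3 (int m))"
    by (rule mult_form[of _ _ 8]) (use im m1 in auto)
  ultimately show ?thesis by (simp add: numeral_eq_enat)
qed

lemma c10:
  assumes "i mod 24 = 10"
  shows "v3 (narayana i - 1) = 2"
proof -
  define m where "m = i div 24"
  have im: "i = 24*m + 10" using assms unfolding m_def by presburger
  have xx10: "xx^10 = NR 9 6 13" by (simp add: xx_def numeral_eq_Suc)
  have i: "xx^i = (xx^24)^m * xx^10" using xxpow[of 24 m 10] im by simp
  have "(3::int)^(Suc 1 + 1) dvd narayana i - L (xx^10)"
    by (rule case_lower[OF i P24]) (auto simp: X24_def xx10 L_def)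
  then have d: "27 dvd narayana i - 19" by (simp add: xx10 L_def)
  obtain k where k: "narayana i - 19 = 27*k" using d by (auto elim: dvdE)
  have e: "narayana i - 1 = 27*k + 18" using k by simp
  have p: "(3::int)^2 = 9" "(3::int)^Suc 2 = 27" by simp_all
  have "v3 (narayana i - 1) = enat 2" unfolding e
    by (rule v3_exact) (unfold p; presburger)+
  then show ?thesis by (simp add: numeral_eq_enat)
qed



lemma c18:
  assumes "i mod 24 = 18"
  shows "v3 (narayana i - 1) = v3 ((int i + 6) * (int i + 30)) + 2"
proof -
  define k where "k = i div 24"
  define n where "n = k div 3"
  have p3: "prime (3::int)" by simp
  have ik: "i = 24*k + 18" using assms unfolding k_def by presburger
  have kn: "k = 3*n + k mod 3" unfolding n_def by simp
  consider "k mod 3 = 0" | "k mod 3 = 1" | "k mod 3 = 2" by linarith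
  then show ?thesis
  proof cases
    case 1
    have i72: "i = 72*n + 18" using ik kn 1 by simp
    have xx18: "xx^18 = NR 189 129 277" by (simp add: xx_def numeral_eq_Suc)
    have i: "xx^i = (xx^72)^n * xx^18" using xxpow[of 72 n 18] i72 by simp
    have "(3::int)^(Suc 2 + 2) dvd narayana i - L (xx^18)"
      by (rule case_lower[OF i P72]) (auto simp: X72_def xx18 L_def)
    then have d: "243 dvd narayana i - 406" by (simp add: xx18 L_def)
    obtain j where j: "narayana i - 406 = 243*j" using d by (auto elim: dvdE)
    have e: "narayana i - 1 = 243*j + 405" using j by simp
    have p: "(3::int)^4 = 81" "(3::int)^Suc 4 = 243" by simp_all
    have l: "v3 (narayana i - 1) = enat 4" unfolding e
      by (rule v3_exact) (unfold p; presburger)+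
    have nd: "\<not> (3::int) dvd (8 * (3 * int n + 1)) * (8 * (3 * int n + 2))"
      by (simp only: prime_dvd_mult_iff[OF p3] de_Morgan_disj) presburger
    have "v3 ((int i + 6) * (int i + 30)) = enat (2 + multiplicity 3 (1::int))"
      by (rule mult_form[OF _ nd]) (simp_all add: i72 algebra_simps)
    then show ?thesis using l by (simp add: numeral_eq_enat)
  next
    case 2
    define m where "m = n + 1"
    have im: "i + 30 = 72*m" using ik kn 2 unfolding m_def by simp
    have m1: "m \<ge> 1" unfolding m_def by simp
    have i: "xx^i = (xx^72)^m * w30" by (rule xxshift[OF w30 im])
    have "v3 (narayana i - 1) = enat (Suc 2 + multiplicity (3::int) (int m) + 2)"
      by (rule case_exact[OF i L_w(6) P72, of 2 16109]) (use m1 in \<open>auto simp: X72_def w30_def L_def\<close>)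
    moreover have nd: "\<not> (3::int) dvd 64 * (3 * int n + 2)"
      by (simp only: prime_dvd_mult_iff[OF p3] de_Morgan_disj) presburger
    have "v3 ((int i + 6) * (int i + 30)) = enat (3 + multiplicity 3 (int m))"
    proof (rule mult_form[OF _ nd])
      have "i = 72*n + 42" using im unfolding m_def by simp
      then have ii: "int i = 72 * int n + 42" by simp
      have "int i + 30 = 72 * int m" using ii unfolding m_def by simp
      moreover have "int i + 6 = 24 * (3 * int n + 2)" using ii by simp
      ultimately show "(int i + 6) * (int i + 30) = 3^3 * (64 * (3 * int n + 2) * int m)"
        by simp
    qed (use m1 in simp)
    ultimately show ?thesis by (simp add: numeral_eq_enat)
  next
    case 3
    define m where "m = n + 1"
    have im: "i + 6 = 72*m" using ik kn 3 unfolding m_def by simp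
    have m1: "m \<ge> 1" unfolding m_def by simp
    have i: "xx^i = (xx^72)^m * w6" by (rule xxshift[OF w6 im])
    have "v3 (narayana i - 1) = enat (Suc 2 + multiplicity (3::int) (int m) + 2)"
      by (rule case_exact[OF i L_w(4) P72, of 2 155322742]) (use m1 in \<open>auto simp: X72_def w6_def L_def\<close>)
    moreover have nd: "\<not> (3::int) dvd 64 * (3 * int n + 4)"
      by (simp only: prime_dvd_mult_iff[OF p3] de_Morgan_disj) presburger
    have "v3 ((int i + 6) * (int i + 30)) = enat (3 + multiplicity 3 (int m))"
    proof (rule mult_form[OF _ nd])
      have "i = 72*n + 66" using im unfolding m_def by simp
      then have ii: "int i = 72 * int n + 66" by simp
      have "int i + 6 = 72 * int m" using ii unfolding m_def by simp
      moreover have "int i + 30 = 24 * (3 * int n + 4)" using ii by simp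
      ultimately show "(int i + 6) * (int i + 30) = 3^3 * (64 * (3 * int n + 4) * int m)"
        by simp
    qed (use m1 in simp)
    ultimately show ?thesis by (simp add: numeral_eq_enat)
  qed
qed


theorem theorem3p5:
  fixes i :: nat
  assumes "i \<ge> 1"
  shows "(i mod 8 \<in> {0, 4, 5, 7} \<longrightarrow> v3 (narayana i - 1) = 0)
       \<and> (i mod 8 = 1 \<longrightarrow> v3 (narayana i - 1) = v3 (int i - 1) + 1)
       \<and> (i mod 8 = 6 \<longrightarrow> v3 (narayana i - 1) = v3 (int i + 2) + 1)
       \<and> (i mod 24 = 2 \<longrightarrow> v3 (narayana i - 1) = v3 (int i - 2) + 2)
       \<and> (i mod 24 = 10 \<longrightarrow> v3 (narayana i - 1) = 2)
       \<and> (i mod 24 = 18 \<longrightarrow> v3 (narayana i - 1) = v3 ((int i + 6) * (int i + 30)) + 2)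
       \<and> (i mod 24 = 3 \<longrightarrow> v3 (narayana i - 1) = v3 (int i - 3) + 2)
       \<and> (i mod 24 = 11 \<longrightarrow> v3 (narayana i - 1) = v3 (int i + 13) + 2)
       \<and> (i mod 24 = 19 \<longrightarrow> v3 (narayana i - 1) = v3 (int i + 5) + 2)"
  using c0457[of i] c1[of i] c6[of i] c2[of i] c10[of i] c18[of i] c3[of i] c11[of i] c19[of i]
  by blast

end
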